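(* For any compact set $K\subset\mathbb C\setminus\partial\Delta$ there is $\delta>0$ such that in either of the cases (1) $p\in K$, $|p|>1$, $|q|<1$ and $\operatorname{dist}(q,\partial\Delta)<\delta$, or (2) $q\in K$, $|q|<1$, $|p|>1$ and $\operatorname{dist}(p,\partial\Delta)<\delta$, the Blaschke product $B_{p,q}$ has at least two distinct critical points on $\partial\Delta$.
   Context: $\Delta$ is the unit disk. For $|p|>1$, $|q|<1$, $B_{p,q}(z)=z\,\frac{z-p}{1-\bar pz}\,\frac{z-q}{1-\bar qz}$. *)

theory Defs
  imports "HOL-Analysis.Analysis"
begin

definition blaschke :: "complex \<Rightarrow> complex \<Rightarrow> complex \<Rightarrow> complex" where
  "blaschke p q z = z * ((z - p) / (1 - cnj p * z)) * ((z - q) / (1 - cnj q * z))"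

end

theory Submission
  imports Defs
begin

lemma conn_ivt0:
  fixes f :: "'a::topological_space \<Rightarrow> real"
  assumes "connected S" "continuous_on S f" "a \<in> S" "b \<in> S" "f a < 0" "0 < f b"
  shows "\<exists>z\<in>S. f z = 0"
proof -
  have c: "connected (f ` S)" using assms connected_continuous_image by blast
  have "0 \<in> f ` S"
    using connectedD_interval[OF c, of "f a" "f b" 0] assms by auto
  then show ?thesis by auto
qed

lemma two_zeros:
  fixes f :: "complex \<Rightarrow> real"
  assumes cont: "continuous_on (sphere 0 1) f" and ab: "a \<in> sphere 0 1" "b \<in> sphere 0 1"
    and s: "f a < 0" "0 < f b"
  shows "\<exists>z1 z2. z1 \<noteq> z2 \<and> z1 \<in> sphere 0 1 \<and> z2 \<in> sphere 0 1 \<and> f z1 = 0 \<and> f z2 = 0"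
proof -
  have "connected (sphere (0::complex) 1)" by (simp add: connected_sphere_eq)
  then obtain z1 where z1: "z1 \<in> sphere 0 1" "f z1 = 0" using conn_ivt0[OF _ cont ab s] by blast
  define g where "g t = z1 * exp (\<i> * complex_of_real t)" for t
  define S where "S = g ` {0<..<2*pi}"
  have gS: "g t \<in> sphere 0 1" for t using z1 by (simp add: g_def norm_mult)
  have connS: "connected S" unfolding S_def g_def
    by (intro connected_continuous_image continuous_intros) auto
  have Ssub: "S \<subseteq> sphere 0 1" using gS S_def by auto
  have inS: "w \<in> S" if w: "w \<in> sphere 0 1" "w \<noteq> z1" for w
  proof -
    have z10: "z1 \<noteq> 0" using z1 by auto
    define u where "u = w / z1"
    have nu: "norm u = 1" using w z1 by (simp add: u_def norm_divide)
    have "u \<noteq> 1" using w z10 by (simp add: u_def)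
    have A: "0 \<le> Arg2pi u" "Arg2pi u < 2*pi" "is_Arg u (Arg2pi u)" using Arg2pi by auto
    then have ue: "u = exp (\<i> * complex_of_real (Arg2pi u))" using nu by (simp add: is_Arg_def)
    have "Arg2pi u \<noteq> 0"
    proof
      assume "Arg2pi u = 0" then have "u = 1" using ue by simp
      then show False using \<open>u \<noteq> 1\<close> by simp
    qed
    then have "Arg2pi u \<in> {0<..<2*pi}" using A by auto
    moreover have "g (Arg2pi u) = w" using ue z10 by (simp add: g_def u_def[symmetric]) (metis u_def nonzero_mult_div_cancel_left times_divide_eq_right ue)
    ultimately show ?thesis unfolding S_def by blast
  qed
  have "a \<noteq> z1" "b \<noteq> z1" using s z1 by auto
  then have "a \<in> S" "b \<in> S" using inS ab by auto
  then obtain z2 where z2: "z2 \<in> S" "f z2 = 0"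
    using conn_ivt0[OF connS continuous_on_subset[OF cont Ssub] _ _ s] by blast
  have "z2 \<noteq> z1"
  proof
    assume "z2 = z1"
    then obtain t where t: "t \<in> {0<..<2*pi}" "g t = z1" using z2 S_def by auto
    then have "exp (\<i> * complex_of_real t) = 1" using z1 by (auto simp: g_def)
    then obtain n::int where n: "t = of_int (2*n) * pi" by (auto simp: exp_eq_1)
    have "0 < of_int (2*n) * pi" "of_int (2*n) * pi < 2 * pi" using t n by auto
    then have "0 < n" "n < 1" by (auto simp: zero_less_mult_iff mult_less_cancel_right)
    then show False by simp
  qed
  then show ?thesis using z1 z2 Ssub by blast
qed


lemma alg:
  fixes a b P Q z c d e f :: complex
  assumes "P \<noteq> 0" "Q \<noteq> 0" "a \<noteq> 0" "b \<noteq> 0" "P + a * c = e" "Q + b * d = f"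
  shows "(1 * (a / P) + z * (((1 - 0) * P - a * (0 - c * 1)) / P^2)) * (b / Q)
     + z * (a / P) * (((1 - 0) * Q - b * (0 - d * 1)) / Q^2)
   = (a / P) * (b / Q) * (1 + z * e / (a * P) + z * f / (b * Q))"
  using assms by (simp add: field_simps power2_eq_square)

definition hh :: "complex \<Rightarrow> complex \<Rightarrow> complex \<Rightarrow> real" where
  "hh p q z = 1 + (1 - (norm p)^2) / (norm (z - p))^2 + (1 - (norm q)^2) / (norm (z - q))^2"

lemma term_real:
  fixes z a :: complex
  assumes z: "norm z = 1" and a: "norm a \<noteq> 1"
  shows "z * (1 - cnj a * a) / ((z - a) * (1 - cnj a * z)) = complex_of_real ((1 - (norm a)^2) / (norm (z - a))^2)"
proof -
  have zz: "z * cnj z = 1" using z by (metis complex_norm_square mult.commute of_real_1 power_one)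
  have za: "z \<noteq> a" using z a by auto
  have e: "1 - cnj a * z = z * cnj (z - a)" using zz by (simp add: algebra_simps)
  have n: "complex_of_real ((norm (z - a))^2) = (z - a) * cnj (z - a)"
    by (rule complex_norm_square)
  have n2: "complex_of_real ((norm a)^2) = cnj a * a"
    using complex_norm_square[of a] by (simp add: mult.commute)
  have z0: "z \<noteq> 0" using z by auto
  have c0: "cnj (z - a) \<noteq> 0" using za by simp
  define w where "w = cnj (z - a)"
  have "z * (1 - cnj a * a) / ((z - a) * (z * w)) = (1 - cnj a * a) / ((z - a) * w)"
  proof -
    have "(z - a) * (z * w) = z * ((z-a)*w)" by (simp add: ac_simps)
    then show ?thesis using nonzero_mult_divide_mult_cancel_left[OF z0] by metis
  qed
  then show ?thesis unfolding e of_real_divide of_real_diff n n2 w_def[symmetric]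
    by (simp add: mult.commute)
qed

lemma blaschke_deriv:
  fixes z p q :: complex
  assumes z: "norm z = 1" and p: "norm p \<noteq> 1" and q: "norm q \<noteq> 1"
  shows "deriv (blaschke p q) z = ((z - p) / (1 - cnj p * z)) * ((z - q) / (1 - cnj q * z)) * complex_of_real (hh p q z)"
proof -
  have dp: "1 - cnj p * z \<noteq> 0"
  proof
    assume "1 - cnj p * z = 0" then have "norm (cnj p * z) = 1" by (metis eq_iff_diff_eq_0 norm_one)
    then show False using p z by (simp add: norm_mult)
  qed
  have dq: "1 - cnj q * z \<noteq> 0"
  proof
    assume "1 - cnj q * z = 0" then have "norm (cnj q * z) = 1" by (metis eq_iff_diff_eq_0 norm_one)
    then show False using q z by (simp add: norm_mult)
  qed
  have zp: "z \<noteq> p" "z \<noteq> q" using z p q by auto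
  have "(blaschke p q has_field_derivative
     (1 * ((z - p) / (1 - cnj p * z)) + z * (((1 - 0) * (1 - cnj p * z) - (z - p) * (0 - cnj p * 1)) / (1 - cnj p * z)^2)) * ((z - q) / (1 - cnj q * z))
     + z * ((z - p) / (1 - cnj p * z)) * (((1 - 0) * (1 - cnj q * z) - (z - q) * (0 - cnj q * 1)) / (1 - cnj q * z)^2)) (at z)"
    unfolding blaschke_def[abs_def]
    using dp dq by (intro derivative_eq_intros) (auto simp: power2_eq_square ac_simps)
  then have "deriv (blaschke p q) z = (1 * ((z - p) / (1 - cnj p * z)) + z * (((1 - 0) * (1 - cnj p * z) - (z - p) * (0 - cnj p * 1)) / (1 - cnj p * z)^2)) * ((z - q) / (1 - cnj q * z))
     + z * ((z - p) / (1 - cnj p * z)) * (((1 - 0) * (1 - cnj q * z) - (z - q) * (0 - cnj q * 1)) / (1 - cnj q * z)^2)"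
    by (rule DERIV_imp_deriv)
  also have "\<dots> = ((z - p) / (1 - cnj p * z)) * ((z - q) / (1 - cnj q * z)) *
       (1 + z * (1 - cnj p * p) / ((z - p) * (1 - cnj p * z)) + z * (1 - cnj q * q) / ((z - q) * (1 - cnj q * z)))"
    by (rule alg) (use dp dq zp in \<open>auto simp: algebra_simps\<close>)
  also have "\<dots> = ((z - p) / (1 - cnj p * z)) * ((z - q) / (1 - cnj q * z)) * complex_of_real (hh p q z)"
    unfolding term_real[OF z p] term_real[OF z q] hh_def by simp
  finally show ?thesis .
qed


lemma real_part1:
  fixes r R d :: real
  assumes "0 < d" "1 + d \<le> r" "r \<le> R"
  defines "c \<equiv> 2 / (r + 1)"
  shows "1 + (1 - r^2) / (1 - 2*r*c + r^2) = - 2 / (r^2 + 2*r - 1)"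
    and "- 2 / (r^2 + 2*r - 1) < - 2 / (R+1)^2"
    and "4 * d / (R+1)^2 \<le> 1 - c^2"
    and "0 < 1 - c^2"
proof -
  have r1: "1 < r" using assms by simp
  have X: "0 < r^2 + 2*r - 1" using r1 by (simp add: power2_eq_square) (smt (verit) mult_pos_pos)
  have D: "1 - 2*r*c + r^2 = (r - 1) * (r^2 + 2*r - 1) / (r + 1)"
    using r1 unfolding c_def by (simp add: field_simps power2_eq_square; simp add: algebra_simps)
  have n1: "r - 1 \<noteq> 0" "r + 1 \<noteq> 0" "r^2 + 2*r - 1 \<noteq> 0" using r1 X by auto
  have "(1 - r^2) / ((r - 1) * (r^2 + 2*r - 1) / (r + 1)) = - ((r+1)^2) / (r^2 + 2*r - 1)"
  proof -
    have g: "\<And>a b X::real. a \<noteq> 0 \<Longrightarrow> b \<noteq> 0 \<Longrightarrow> X \<noteq> 0 \<Longrightarrow> (-(a*b)) / (a*X/b) = -(b^2)/X"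
      by (simp add: field_simps power2_eq_square)
    have "1 - r^2 = -((r-1)*(r+1))" by (simp add: algebra_simps power2_eq_square)
    then show ?thesis using g[OF n1] by simp
  qed
  show "1 + (1 - r^2) / (1 - 2*r*c + r^2) = - 2 / (r^2 + 2*r - 1)"
  proof -
    have g2: "\<And>Y::real. Y \<noteq> 0 \<Longrightarrow> 1 + (-(Y+2)/Y) = -2/Y" by (simp add: field_simps)
    have "(r+1)^2 = (r^2 + 2*r - 1) + 2" by (simp add: algebra_simps power2_eq_square)
    note E = \<open>(1 - r^2) / ((r - 1) * (r^2 + 2*r - 1) / (r + 1)) = - ((r+1)^2) / (r^2 + 2*r - 1)\<close>
    have "1 + (1 - r^2) / (1 - 2*r*c + r^2) = 1 + (- ((r+1)^2) / (r^2 + 2*r - 1))"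
      by (simp only: D E)
    also have "\<dots> = 1 + (- ((r^2 + 2*r - 1) + 2) / (r^2 + 2*r - 1))"
      by (simp only: \<open>(r+1)^2 = (r^2 + 2*r - 1) + 2\<close>)
    also have "\<dots> = -2 / (r^2 + 2*r - 1)" by (rule g2[OF n1(3)])
    finally show ?thesis .
  qed
  have "(r+1)^2 \<le> (R+1)^2" using r1 assms(3) by (intro power_mono) auto
  moreover have "(r+1)^2 = (r^2 + 2*r - 1) + 2" by (simp add: algebra_simps power2_eq_square)
  ultimately have XR: "r^2 + 2*r - 1 < (R+1)^2" by linarith
  have "2 / (R+1)^2 < 2 / (r^2 + 2*r - 1)"
    using X XR by (intro divide_strict_left_mono) (auto intro!: mult_pos_pos)
  then show "- 2 / (r^2 + 2*r - 1) < - 2 / (R+1)^2" by simp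
  have cs: "1 - c^2 = (r - 1) * (r + 3) / (r+1)^2"
  proof -
    have g: "\<And>b::real. b \<noteq> 0 \<Longrightarrow> 1 - (2/b)^2 = (b^2 - 4)/b^2" by (simp add: field_simps power2_eq_square)
    have "(r+1)^2 - 4 = (r - 1) * (r + 3)" by (simp add: algebra_simps power2_eq_square)
    then show ?thesis unfolding c_def using g[of "r+1"] r1 by simp
  qed
  show "0 < 1 - c^2" unfolding cs using r1 by simp
  have "4 * d / (R+1)^2 \<le> (r - 1) * (r + 3) / (R+1)^2"
  proof -
    have "d * 4 \<le> (r - 1) * (r + 3)" using assms r1 by (intro mult_mono) auto
    then show ?thesis by (intro divide_right_mono) auto
  qed
  also have "\<dots> \<le> (r - 1) * (r + 3) / (r+1)^2"
    using r1 assms by (intro divide_left_mono) (auto intro!: power_mono)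
  finally show "4 * d / (R+1)^2 \<le> 1 - c^2" unfolding cs .
qed

lemma case1_point:
  fixes p q z :: complex and d R \<delta> s c :: real
  assumes d: "0 < d" and r: "1 + d \<le> norm p" "norm p \<le> R"
    and q: "norm q < 1" "1 - norm q < \<delta>" "\<delta> \<le> d / (R+1)^4"
    and c: "c = 2 / (norm p + 1)" and s2: "s^2 = 1 - c^2" and s0: "0 \<le> s"
    and zp: "(norm (z - p))^2 = 1 - 2 * norm p * c + (norm p)^2"
    and zq: "s \<le> norm (z - q)"
  shows "hh p q z < 0"
proof -
  define r where "r = norm p"
  have r1: "1 + d \<le> r" "r \<le> R" using r r_def by auto
  note P = real_part1[OF d r1]
  have R0: "0 < (R+1)^2" using r1 d by auto
  have sq: "4 * d / (R+1)^2 \<le> s^2" using P(3) s2 c r_def by simp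
  have sq0: "0 < 4 * d / (R+1)^2" using d R0 by simp
  have Qn: "1 - (norm q)^2 \<le> 2 * \<delta>"
  proof -
    have "1 - (norm q)^2 = (1 - norm q) * (1 + norm q)" by (simp add: algebra_simps power2_eq_square)
    also have "\<dots> \<le> (1 - norm q) * 2" using q by (intro mult_left_mono) auto
    finally show ?thesis using q by simp
  qed
  have Q0: "0 \<le> 1 - (norm q)^2" using q by (simp add: abs_square_le_1)
  have "s^2 \<le> (norm (z - q))^2" using zq s0 by (intro power_mono) auto
  then have "(1 - (norm q)^2) / (norm (z - q))^2 \<le> (1 - (norm q)^2) / s^2"
    using Q0 sq sq0 by (intro divide_left_mono) (auto intro!: mult_pos_pos)
  also have "\<dots> \<le> (2 * \<delta>) / (4 * d / (R+1)^2)"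
    using Qn sq sq0 q by (intro frac_le) auto
  also have "\<dots> = \<delta> * (R+1)^2 / (2 * d)" using d R0 by (simp add: field_simps)
  also have "\<dots> \<le> (d / (R+1)^4) * (R+1)^2 / (2 * d)"
    using q d R0 by (intro divide_right_mono mult_right_mono) auto
  also have "\<dots> = 1 / (2 * (R+1)^2)"
  proof -
    have g: "\<And>A::real. 0 < A \<Longrightarrow> (d / A^2) * A / (2 * d) = 1 / (2 * A)"
      using d by (simp add: field_simps power2_eq_square)
    have "(R+1)^4 = ((R+1)^2)^2" by simp
    then show ?thesis using g[OF R0] by simp
  qed
  finally have Qt: "(1 - (norm q)^2) / (norm (z - q))^2 \<le> 1 / (2 * (R+1)^2)" .
  have "hh p q z = (1 + (1 - r^2) / (1 - 2*r*c + r^2)) + (1 - (norm q)^2) / (norm (z - q))^2"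
    unfolding hh_def r_def zp by simp
  also have "\<dots> = - 2 / (r^2 + 2*r - 1) + (1 - (norm q)^2) / (norm (z - q))^2"
    using P(1) c r_def by simp
  also have "\<dots> < - 2 / (R+1)^2 + 1 / (2 * (R+1)^2)" using P(2) Qt by linarith
  also have "\<dots> < 0" using R0 by (simp add: field_simps)
  finally show ?thesis .
qed

lemma case1_neg:
  fixes p q :: complex and d R \<delta> :: real
  assumes d: "0 < d" and r: "1 + d \<le> norm p" "norm p \<le> R"
    and q: "norm q < 1" "1 - norm q < \<delta>" "\<delta> \<le> d / (R+1)^4"
  shows "\<exists>z\<in>sphere 0 1. hh p q z < 0"
proof -
  define r where "r = norm p"
  have r1: "1 < r" using r d r_def by simp
  define u where "u = p / complex_of_real r"
  have p0: "p \<noteq> 0" proof assume "p = 0" then show False using r1 r_def by simp qed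
  have pu: "p = complex_of_real r * u" using p0 r_def by (simp add: u_def)
  have nu: "norm u = 1" using p0 r_def by (simp add: u_def norm_divide)
  define c where "c = 2 / (r + 1)"
  define s where "s = sqrt (1 - c^2)"
  have cpos: "0 < 1 - c^2" using real_part1(4)[OF d r(1)[folded r_def] r(2)[folded r_def]] c_def by simp
  have s2: "s^2 = 1 - c^2" unfolding s_def using cpos by (intro real_sqrt_pow2) linarith
  have s0: "0 \<le> s" unfolding s_def using cpos by simp
  define w1 where "w1 = Complex c s"
  define w2 where "w2 = Complex c (- s)"
  have nw: "norm w1 = 1" "norm w2 = 1" using s2 by (auto simp: w1_def w2_def complex_norm)
  have dist_p: "(norm (u * w - p))^2 = 1 - 2 * r * c + r^2" if "w = w1 \<or> w = w2" for w
  proof -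
    have "u * w - p = u * (w - complex_of_real r)" by (simp add: pu algebra_simps)
    then have "norm (u * w - p) = norm (w - complex_of_real r)" by (simp add: norm_mult nu)
    moreover have "(norm (w - complex_of_real r))^2 = (c - r)^2 + s^2"
      using that by (auto simp: w1_def w2_def cmod_power2)
    ultimately show ?thesis using s2 by (simp add: power2_eq_square algebra_simps)
  qed
  have "norm (u * w1 - u * w2) = 2 * s"
  proof -
    have "u * w1 - u * w2 = u * Complex 0 (2 * s)" by (simp add: w1_def w2_def algebra_simps complex_eq_iff)
    then show ?thesis using s0 by (simp add: norm_mult nu cmod_eq_Im)
  qed
  have "2 * s \<le> norm (u * w1 - q) + norm (u * w2 - q)"
  proof -
    have "u * w1 - u * w2 = (u * w1 - q) - (u * w2 - q)" by simp
    then have "norm (u * w1 - u * w2) \<le> norm (u * w1 - q) + norm (u * w2 - q)"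
      by (metis norm_triangle_ineq4)
    then show ?thesis using \<open>norm (u * w1 - u * w2) = 2 * s\<close> by simp
  qed
  then have "s \<le> norm (u * w1 - q) \<or> s \<le> norm (u * w2 - q)" by linarith
  then obtain w where w: "w = w1 \<or> w = w2" "s \<le> norm (u * w - q)" by blast
  have "hh p q (u * w) < 0"
    by (rule case1_point[OF d r q c_def[unfolded r_def] s2[unfolded c_def r_def, folded c_def[unfolded r_def]] s0])
       (use dist_p[OF w(1)] w(2) r_def in auto)
  moreover have "u * w \<in> sphere 0 1" using w(1) nw nu by (auto simp: norm_mult)
  ultimately show ?thesis by blast
qed

lemma case1_pos:
  fixes p q :: complex and d R \<delta> :: real
  assumes d: "0 < d" and r: "1 + d \<le> norm p" "norm p \<le> R"
    and q: "norm q < 1" "1 - norm q < \<delta>" "\<delta> \<le> 1/2" "\<delta> \<le> d^2 / (R^2 + 1)"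
  shows "\<exists>z\<in>sphere 0 1. hh p q z > 0"
proof -
  define \<rho> where "\<rho> = norm q"
  have \<rho>: "1/2 < \<rho>" "\<rho> < 1" using q \<rho>_def by auto
  have q0: "q \<noteq> 0" proof assume "q = 0" then show False using \<rho> \<rho>_def by simp qed
  define v where "v = q / complex_of_real \<rho>"
  have qv: "q = complex_of_real \<rho> * v" using q0 \<rho>_def by (simp add: v_def)
  have nv: "norm v = 1" using q0 \<rho>_def by (simp add: v_def norm_divide)
  have "v - q = complex_of_real (1 - \<rho>) * v" by (simp add: qv algebra_simps)
  then have "norm (v - q) = \<bar>1 - \<rho>\<bar> * norm v" by (simp only: norm_mult norm_of_real)
  then have vq: "norm (v - q) = 1 - \<rho>" using \<rho> nv by simp
  have "norm p - norm v \<le> norm (v - p)" using norm_triangle_ineq2[of p v] by (simp add: norm_minus_commute)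
  then have vp: "d \<le> norm (v - p)" using r nv by simp
  have R0: "0 \<le> R" using r d by (smt (verit) norm_ge_zero)
  have "((norm p)^2 - 1) / (norm (v - p))^2 \<le> R^2 / d^2"
  proof (rule frac_le)
    show "(norm p)^2 - 1 \<le> R^2" using r R0 by (smt (verit) norm_ge_zero power_mono)
    show "0 \<le> R^2" by simp
    show "0 < d^2" using d by simp
    show "d^2 \<le> (norm (v - p))^2" using vp d by (intro power_mono) auto
  qed
  then have P: "- (R^2 / d^2) \<le> (1 - (norm p)^2) / (norm (v - p))^2"
  proof -
    have "(1 - (norm p)^2) / (norm (v - p))^2 = - (((norm p)^2 - 1) / (norm (v - p))^2)"
      by (simp add: minus_divide_left)
    then show ?thesis using \<open>((norm p)^2 - 1) / (norm (v - p))^2 \<le> R^2 / d^2\<close> by linarith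
  qed
  have "(1 - \<rho>^2) / (1 - \<rho>)^2 = (1 + \<rho>) / (1 - \<rho>)"
  proof -
    have g: "\<And>a b::real. a \<noteq> 0 \<Longrightarrow> (a * b) / a^2 = b / a" by (simp add: power2_eq_square)
    have "1 - \<rho>^2 = (1 - \<rho>) * (1 + \<rho>)" by (simp add: algebra_simps power2_eq_square)
    then show ?thesis using g[of "1 - \<rho>" "1 + \<rho>"] \<rho> by simp
  qed
  moreover have "1 / \<delta> \<le> (1 + \<rho>) / (1 - \<rho>)"
  proof -
    have "1 / \<delta> \<le> 1 / (1 - \<rho>)" using \<rho> q \<rho>_def by (intro divide_left_mono) auto
    also have "\<dots> \<le> (1 + \<rho>) / (1 - \<rho>)" using \<rho> by (intro divide_right_mono) auto
    finally show ?thesis .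
  qed
  moreover have "R^2 / d^2 \<le> 1 / \<delta>"
  proof -
    have dp: "0 < \<delta>" using q by simp
    have "\<delta> * (R^2 + 1) \<le> d^2" using q(4) by (simp add: field_simps add_pos_nonneg)
    then have "\<delta> * R^2 \<le> d^2" using dp by (simp add: algebra_simps)
    then show ?thesis using dp d by (simp add: field_simps)
  qed
  ultimately have "0 < 1 + (1 - (norm p)^2) / (norm (v - p))^2 + (1 - \<rho>^2) / (1 - \<rho>)^2"
    using P by linarith
  then have "hh p q v > 0" unfolding hh_def vq \<rho>_def by simp
  then show ?thesis using nv by auto
qed

lemma case2:
  fixes p q :: complex and d \<delta> :: real
  assumes d: "0 < d" and q: "d \<le> 1 - norm q"
    and p: "1 < norm p" "norm p - 1 < \<delta>" "\<delta> \<le> d^2 / (d^2 + 1)"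
  shows "\<exists>z\<in>sphere 0 1. hh p q z < 0" "\<exists>z\<in>sphere 0 1. hh p q z > 0"
proof -
  define r where "r = norm p"
  have r1: "1 < r" using p r_def by simp
  have p0: "p \<noteq> 0" proof assume "p = 0" then show False using r1 r_def by simp qed
  define u where "u = p / complex_of_real r"
  have pu: "p = complex_of_real r * u" using p0 r_def by (simp add: u_def)
  have nu: "norm u = 1" using p0 r_def by (simp add: u_def norm_divide)
  have "u - p = complex_of_real (1 - r) * u" by (simp add: pu algebra_simps)
  then have "norm (u - p) = \<bar>1 - r\<bar> * norm u" by (simp only: norm_mult norm_of_real)
  then have up: "norm (u - p) = r - 1" using r1 nu by simp
  have "-u - p = - (complex_of_real (1 + r) * u)" by (simp add: pu algebra_simps)
  then have "norm (-u - p) = \<bar>1 + r\<bar> * norm u" by (simp only: norm_minus_cancel norm_mult norm_of_real)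
  then have mup: "norm (-u - p) = r + 1" using r1 nu by simp
  have "norm u - norm q \<le> norm (u - q)" by (rule norm_triangle_ineq2)
  then have uq: "d \<le> norm (u - q)" using q nu by simp
  have Q0: "0 \<le> 1 - (norm q)^2" using q d by (simp add: abs_square_le_1)
  have Q1: "1 - (norm q)^2 \<le> 1" by simp
  have qt: "(1 - (norm q)^2) / (norm (u - q))^2 \<le> 1 / d^2"
    using Q0 Q1 d uq by (intro frac_le) (auto intro!: power_mono)
  have pt: "(1 - r^2) / (r - 1)^2 = - ((r + 1) / (r - 1))"
  proof -
    have g: "\<And>a b::real. a \<noteq> 0 \<Longrightarrow> (-(a * b)) / a^2 = - (b / a)" by (simp add: power2_eq_square)
    have "1 - r^2 = -((r - 1) * (r + 1))" by (simp add: algebra_simps power2_eq_square)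
    then show ?thesis using g[of "r - 1" "r + 1"] r1 by simp
  qed
  have dp: "0 < \<delta>" using p by simp
  have "2 / \<delta> \<le> (r + 1) / (r - 1)"
  proof -
    have "2 / \<delta> \<le> 2 / (r - 1)" using r1 p r_def by (intro divide_left_mono) auto
    also have "\<dots> \<le> (r + 1) / (r - 1)" using r1 by (intro divide_right_mono) auto
    finally show ?thesis .
  qed
  moreover have "2 + 2 / d^2 \<le> 2 / \<delta>"
  proof -
    have "\<delta> * (d^2 + 1) \<le> d^2" using p(3) d by (simp add: field_simps add_pos_nonneg)
    then have "\<delta> * (2 * d^2 + 2) \<le> 2 * d^2" by (simp add: algebra_simps)
    then show ?thesis using dp d by (simp add: field_simps)
  qed
  moreover have "0 < 1 / d^2" using d by simp
  ultimately have "hh p q u < 0" unfolding hh_def r_def[symmetric] up pt using qt by linarith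
  then show "\<exists>z\<in>sphere 0 1. hh p q z < 0" using nu by auto
  have pt2: "(1 - r^2) / (r + 1)^2 = - ((r - 1) / (r + 1))"
  proof -
    have g: "\<And>a b::real. a \<noteq> 0 \<Longrightarrow> (-(a * b)) / a^2 = - (b / a)" by (simp add: power2_eq_square)
    have "1 - r^2 = -((r + 1) * (r - 1))" by (simp add: algebra_simps power2_eq_square)
    then show ?thesis using g[of "r + 1" "r - 1"] r1 by simp
  qed
  have "(r - 1) / (r + 1) < 1" using r1 by simp
  moreover have "0 \<le> (1 - (norm q)^2) / (norm (-u - q))^2" using Q0 by simp
  ultimately have "hh p q (-u) > 0" unfolding hh_def r_def[symmetric] mup pt2 by linarith
  then show "\<exists>z\<in>sphere 0 1. hh p q z > 0" using nu by (intro bexI[of _ "-u"]) auto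
qed


lemma infdist_sphere_ge:
  fixes x :: complex
  shows "\<bar>norm x - 1\<bar> \<le> infdist x (sphere 0 1)"
proof -
  have ne: "sphere (0::complex) 1 \<noteq> {}" using sphere_eq_empty by fastforce
  have "\<bar>norm x - 1\<bar> \<le> (INF y\<in>sphere 0 1. dist x y)"
  proof (rule cINF_greatest[OF ne])
    fix y :: complex assume "y \<in> sphere 0 1"
    then have "norm y = 1" by simp
    then show "\<bar>norm x - 1\<bar> \<le> dist x y"
      using norm_triangle_ineq3[of x y] by (simp add: dist_norm)
  qed
  then show ?thesis using infdist_notempty[OF ne] by simp
qed

lemma hh_cont:
  assumes "norm p \<noteq> 1" "norm q \<noteq> 1"
  shows "continuous_on (sphere 0 1) (hh p q)"
proof -
  have "\<And>z. z \<in> sphere 0 1 \<Longrightarrow> (norm (z - p))^2 \<noteq> 0 \<and> (norm (z - q))^2 \<noteq> 0"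
    using assms by auto
  then show ?thesis unfolding hh_def[abs_def]
    by (intro continuous_intros) auto
qed

lemma conclude:
  assumes p: "norm p \<noteq> 1" and q: "norm q \<noteq> 1"
    and a: "a \<in> sphere 0 1" "hh p q a < 0" and b: "b \<in> sphere 0 1" "0 < hh p q b"
  shows "\<exists>z1 z2. z1 \<noteq> z2 \<and> z1 \<in> sphere 0 1 \<and> z2 \<in> sphere 0 1 \<and>
       deriv (blaschke p q) z1 = 0 \<and> deriv (blaschke p q) z2 = 0"
proof -
  obtain z1 z2 where z: "z1 \<noteq> z2" "z1 \<in> sphere 0 1" "z2 \<in> sphere 0 1" "hh p q z1 = 0" "hh p q z2 = 0"
    using two_zeros[OF hh_cont[OF p q] a(1) b(1) a(2) b(2)] by blast
  have "deriv (blaschke p q) z1 = 0" using blaschke_deriv[of z1 p q] z p q by simp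
  moreover have "deriv (blaschke p q) z2 = 0" using blaschke_deriv[of z2 p q] z p q by simp
  ultimately show ?thesis using z by blast
qed

theorem mainTheorem13:
  fixes K :: "complex set"
  assumes "compact K" and "K \<inter> sphere 0 1 = {}"
  shows "\<exists>\<delta>>0. \<forall>p q.
    ((p \<in> K \<and> norm p > 1 \<and> norm q < 1 \<and> infdist q (sphere 0 1) < \<delta>) \<or>
     (q \<in> K \<and> norm q < 1 \<and> norm p > 1 \<and> infdist p (sphere 0 1) < \<delta>)) \<longrightarrow>
    (\<exists>z1 z2. z1 \<noteq> z2 \<and> z1 \<in> sphere 0 1 \<and> z2 \<in> sphere 0 1 \<and>
       deriv (blaschke p q) z1 = 0 \<and> deriv (blaschke p q) z2 = 0)"
proof (cases "K = {}")
  case True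
  then show ?thesis by (intro exI[of _ 1]) auto
next
  case False
  have cont: "continuous_on K (\<lambda>x. \<bar>norm x - 1\<bar>)" by (intro continuous_intros)
  obtain x0 where x0: "x0 \<in> K" "\<And>y. y \<in> K \<Longrightarrow> \<bar>norm x0 - 1\<bar> \<le> \<bar>norm y - 1\<bar>"
    using continuous_attains_inf[OF assms(1) False cont] by blast
  define d where "d = \<bar>norm x0 - 1\<bar>"
  have "norm x0 \<noteq> 1" using x0(1) assms(2) by auto
  then have d0: "0 < d" by (simp add: d_def)
  have dK: "\<And>y. y \<in> K \<Longrightarrow> d \<le> \<bar>norm y - 1\<bar>" using x0 d_def by simp
  obtain R where R: "0 < R" "\<And>x. x \<in> K \<Longrightarrow> norm x \<le> R"
    using compact_imp_bounded[OF assms(1)] bounded_pos by blast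
  define \<delta> where "\<delta> = min (min (1/2) (d^2 / (R^2 + 1))) (min (d / (R+1)^4) (d^2 / (d^2 + 1)))"
  have \<delta>b: "\<delta> \<le> 1/2" "\<delta> \<le> d^2 / (R^2 + 1)" "\<delta> \<le> d / (R+1)^4" "\<delta> \<le> d^2 / (d^2 + 1)"
    unfolding \<delta>_def by (meson min.cobounded1 min.cobounded2 order_trans)+
  have \<delta>0: "0 < \<delta>" unfolding \<delta>_def using d0 R(1) by (simp add: add_pos_nonneg)
  show ?thesis
  proof (intro exI[of _ \<delta>] conjI allI impI \<delta>0)
    fix p q :: complex
    assume H: "(p \<in> K \<and> norm p > 1 \<and> norm q < 1 \<and> infdist q (sphere 0 1) < \<delta>) \<or>
     (q \<in> K \<and> norm q < 1 \<and> norm p > 1 \<and> infdist p (sphere 0 1) < \<delta>)"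
    then show "\<exists>z1 z2. z1 \<noteq> z2 \<and> z1 \<in> sphere 0 1 \<and> z2 \<in> sphere 0 1 \<and>
       deriv (blaschke p q) z1 = 0 \<and> deriv (blaschke p q) z2 = 0"
    proof
      assume h: "p \<in> K \<and> norm p > 1 \<and> norm q < 1 \<and> infdist q (sphere 0 1) < \<delta>"
      have r: "1 + d \<le> norm p" "norm p \<le> R" using dK[of p] R(2)[of p] h by auto
      have qd: "1 - norm q < \<delta>" using infdist_sphere_ge[of q] h by linarith
      obtain a where a: "a \<in> sphere 0 1" "hh p q a < 0"
        using case1_neg[OF d0 r _ qd \<delta>b(3)] h by auto
      obtain b where b: "b \<in> sphere 0 1" "0 < hh p q b"
        using case1_pos[OF d0 r _ qd \<delta>b(1,2)] h by auto
      show ?thesis by (rule conclude[OF _ _ a b]) (use h in auto)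
    next
      assume h: "q \<in> K \<and> norm q < 1 \<and> norm p > 1 \<and> infdist p (sphere 0 1) < \<delta>"
      have qd: "d \<le> 1 - norm q" using dK[of q] h by auto
      have pd: "norm p - 1 < \<delta>" using infdist_sphere_ge[of p] h by linarith
      obtain a where a: "a \<in> sphere 0 1" "hh p q a < 0"
        using case2(1)[OF d0 qd _ pd \<delta>b(4)] h by auto
      obtain b where b: "b \<in> sphere 0 1" "0 < hh p q b"
        using case2(2)[OF d0 qd _ pd \<delta>b(4)] h by auto
      show ?thesis by (rule conclude[OF _ _ a b]) (use h in auto)
    qed
  qed
qed

end
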